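(* Let $x_0\in\mathbb{R}\cup\{+\infty\}$, $T<x_0$, $I=[T,x_0)$, and let $\phi_1,\phi_2\in C^1(I)$ satisfy $\phi_2(x)=o(\phi_1(x))$ as $x\to x_0$, $\phi_1(x)>0$ and $\phi_2(x)\neq0$ for all $x\in I$, and $W(x):=W(\phi_1,\phi_2;x)>0$ for all $x\in I$. Let $f\in\mathcal{C}(\phi_1,\phi_2;(T,x_0))$. Then: (i) $f$ is absolutely continuous on every compact subinterval of $(T,x_0)$; (ii) the functions $f_1^*,f_2^*,F^*$ are defined a.e. on $(T,x_0)$ and, for some Lebesgue null set $N$, are monotonic on $(T,x_0)\setminus N$: $f_2^*$ is increasing; $f_1^*$ and $F^*$ have opposite types of monotonicity; and $(\operatorname{sign}\phi_2)\cdot F^*$ is increasing; (iii) for any real constants $a_1,a_2$ and any nontrivial linear combination $\tilde\phi$ of $\phi_1,\phi_2$, the function $[f(x)+a_1\phi_1(x)+a_2\phi_2(x)]/\tilde\phi(x)$ is either constant or strictly monotonic on a suitable deleted one-sided neighborhood (within $(T,x_0)$) of each of the endpoints $T$ and $x_0$; (iv) the two limits $$\lim_{x\to x_0}\frac{f(x)}{\phi_1(x)},\qquad \lim_{x\to x_0}\frac{(f(x)/\phi_2(x))'}{(\phi_1(x)/\phi_2(x))'}$$ exist in $\overline{\mathbb{R}}=\mathbb{R}\cup\{\pm\infty\}$ and are equal.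
   Context: Limits as $x\to x_0$ are taken for $x<x_0$, over points where the functions are defined. For differentiable $g,h$, $W(g,h;x):=g(x)h'(x)-g'(x)h(x)$. Generalized convexity: for a pair $(\psi_1,\psi_2)$ of continuous functions on an interval $J$, a function $f:J\to\mathbb{R}$ belongs to $\mathcal{C}(\psi_1,\psi_2;J)$ iff for all $t_1<t_2<t_3$ in $J$ $$\det\begin{pmatrix}\psi_1(t_1)&\psi_1(t_2)&\psi_1(t_3)\\ \psi_2(t_1)&\psi_2(t_2)&\psi_2(t_3)\\ f(t_1)&f(t_2)&f(t_3)\end{pmatrix}\ge0.$$ Definitions: at points $t$ where $f$ is differentiable, $f_1^*(t):=W(f,\phi_2;t)/W(t)$, $f_2^*(t):=-W(f,\phi_1;t)/W(t)$; $\Phi(x):=\phi_2(T)\phi_1(x)-\phi_1(T)\phi_2(x)$; $F^*(t):=\phi_1(T)f_1^*(t)+\phi_2(T)f_2^*(t)=W(\Phi,f;t)/W(t)$. "Increasing" means nondecreasing. *)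

theory Defs
  imports "HOL-Analysis.Analysis" "HOL-Library.Landau_Symbols"
begin

text \<open>Left-sided limit filter at x0 (x0 real or +infinity), restricted to a set D
  of points where the function under consideration is defined.\<close>
definition left_filter :: "ereal \<Rightarrow> real set \<Rightarrow> real filter" where
  "left_filter x0 D =
     inf (if x0 = \<infinity> then at_top else at_left (real_of_ereal x0)) (principal D)"

text \<open>Generalized convexity class C(psi1,psi2;J): the 3x3 determinant (expanded
  along the first row) is nonnegative for all t1 < t2 < t3 in J.\<close>
definition gen_convex ::
  "(real \<Rightarrow> real) \<Rightarrow> (real \<Rightarrow> real) \<Rightarrow> real set \<Rightarrow> (real \<Rightarrow> real) \<Rightarrow> bool" where
  "gen_convex p1 p2 J f \<longleftrightarrow>
     (\<forall>t1\<in>J. \<forall>t2\<in>J. \<forall>t3\<in>J. t1 < t2 \<and> t2 < t3 \<longrightarrow>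
        0 \<le> p1 t1 * (p2 t2 * f t3 - p2 t3 * f t2)
           - p1 t2 * (p2 t1 * f t3 - p2 t3 * f t1)
           + p1 t3 * (p2 t1 * f t2 - p2 t2 * f t1))"

definition abs_continuous_on :: "real \<Rightarrow> real \<Rightarrow> (real \<Rightarrow> real) \<Rightarrow> bool" where
  "abs_continuous_on a b f \<longleftrightarrow>
     (\<forall>\<epsilon>>0. \<exists>\<delta>>0. \<forall>(n::nat) (u::nat \<Rightarrow> real) (v::nat \<Rightarrow> real).
        (\<forall>i<n. a \<le> u i \<and> u i \<le> v i \<and> v i \<le> b) \<and>
        (\<forall>i<n. \<forall>j<n. i \<noteq> j \<longrightarrow> v i \<le> u j \<or> v j \<le> u i) \<and>
        (\<Sum>i<n. v i - u i) < \<delta>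
        \<longrightarrow> (\<Sum>i<n. \<bar>f (v i) - f (u i)\<bar>) < \<epsilon>)"

end

theory Submission
  imports Defs
begin

lemma ev_left:
  assumes "x0 \<noteq> -\<infinity>"
  shows "eventually P (left_filter x0 D) \<longleftrightarrow> (\<exists>a. ereal a < x0 \<and> (\<forall>x\<in>D. a < x \<and> ereal x < x0 \<longrightarrow> P x))"
proof (cases x0)
  case (real r)
  then show ?thesis
    by (auto simp: left_filter_def eventually_inf_principal eventually_at_left_field)
next
  case PInf
  have "eventually P (left_filter x0 D) \<longleftrightarrow> (\<exists>N. \<forall>x\<ge>N. x \<in> D \<longrightarrow> P x)"
    unfolding left_filter_def PInf by (simp add: eventually_inf_principal eventually_at_top_linorder)
  also have "\<dots> \<longleftrightarrow> (\<exists>a. ereal a < x0 \<and> (\<forall>x\<in>D. a < x \<and> ereal x < x0 \<longrightarrow> P x))"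
    unfolding PInf
    apply auto
    apply (rule_tac x=N in exI, auto)
    apply (rule_tac x="a+1" in exI, auto)
    done
  finally show ?thesis .
qed (use assms in auto)

lemma moeb:
  fixes c1 c2 Y1 Y2 Y3 G1 G2 G3 :: real
  assumes "c1 + c2*Y1 \<noteq> 0" "c1 + c2*Y2 \<noteq> 0" "c1 + c2*Y3 \<noteq> 0"
  shows "((c1*Y2 - c2)/(c1+c2*Y2) - (c1*Y1 - c2)/(c1+c2*Y1)) * (G3/(c1+c2*Y3) - G1/(c1+c2*Y1))
       - ((c1*Y3 - c2)/(c1+c2*Y3) - (c1*Y1 - c2)/(c1+c2*Y1)) * (G2/(c1+c2*Y2) - G1/(c1+c2*Y1))
   = (c1^2+c2^2) * ((Y2-Y1)*(G3-G1) - (Y3-Y1)*(G2-G1)) / ((c1+c2*Y1)*(c1+c2*Y2)*(c1+c2*Y3))"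
proof -
  define l1 where "l1 = c1+c2*Y1"
  define l2 where "l2 = c1+c2*Y2"
  define l3 where "l3 = c1+c2*Y3"
  have z: "\<And>Ya Yb la (lb::real). la = c1+c2*Ya \<Longrightarrow> lb = c1+c2*Yb \<Longrightarrow> la \<noteq> 0 \<Longrightarrow> lb \<noteq> 0 \<Longrightarrow>
     (c1*Yb - c2)/lb - (c1*Ya - c2)/la = (c1^2+c2^2)*(Yb-Ya)/(la*lb)"
    by (simp add: field_simps power2_eq_square)
  have g: "\<And>Ga Gb la (lb::real). la \<noteq> 0 \<Longrightarrow> lb \<noteq> 0 \<Longrightarrow> Gb/lb - Ga/la = (Gb*la - Ga*lb)/(la*lb)"
    by (simp add: field_simps)
  have key: "(Y2-Y1)*(G3*l1 - G1*l3) - (Y3-Y1)*(G2*l1-G1*l2) = l1*((Y2-Y1)*(G3-G1) - (Y3-Y1)*(G2-G1))"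
    unfolding l1_def l2_def l3_def by algebra
  show ?thesis
    unfolding l1_def[symmetric] l2_def[symmetric] l3_def[symmetric]
    using assms unfolding l1_def[symmetric] l2_def[symmetric] l3_def[symmetric]
    apply (subst z[OF l1_def l2_def], simp, simp)
    apply (subst z[OF l1_def l3_def], simp, simp)
    apply (subst g, simp, simp)+
    apply (simp add: divide_simps)
    using key by algebra
qed


definition zconv :: "(real \<Rightarrow> real) \<Rightarrow> (real \<Rightarrow> real) \<Rightarrow> real set \<Rightarrow> bool" where
  "zconv Z g K \<longleftrightarrow> (\<forall>x\<in>K. \<forall>y\<in>K. x < y \<longrightarrow> Z x < Z y) \<and>
     (\<forall>x1\<in>K. \<forall>x2\<in>K. \<forall>x3\<in>K. x1 < x2 \<and> x2 < x3 \<longrightarrow>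
        0 \<le> (Z x2 - Z x1) * (g x3 - g x1) - (Z x3 - Z x1) * (g x2 - g x1))"

definition slp :: "(real \<Rightarrow> real) \<Rightarrow> (real \<Rightarrow> real) \<Rightarrow> real \<Rightarrow> real \<Rightarrow> real" where
  "slp Z g x y = (g y - g x) / (Z y - Z x)"

definition cmono :: "real set \<Rightarrow> (real \<Rightarrow> real) \<Rightarrow> bool" where
  "cmono S g \<longleftrightarrow> (\<exists>c. \<forall>x\<in>S. g x = c) \<or> strict_mono_on S g \<or> strict_antimono_on S g"

lemma zconv_slopes:
  assumes "zconv Z g K" "x \<in> K" "y \<in> K" "w \<in> K" "x < y" "y < w"
  shows "slp Z g x y \<le> slp Z g x w" "slp Z g x w \<le> slp Z g y w"
proof -
  have zy: "Z x < Z y" "Z y < Z w" "Z x < Z w" using assms unfolding zconv_def by auto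
  have D: "0 \<le> (Z y - Z x) * (g w - g x) - (Z w - Z x) * (g y - g x)"
    using assms unfolding zconv_def by auto
  show "slp Z g x y \<le> slp Z g x w"
    unfolding slp_def using zy D by (simp add: divide_simps) (simp add: algebra_simps)
  show "slp Z g x w \<le> slp Z g y w"
    unfolding slp_def using zy D by (simp add: divide_simps) (simp add: algebra_simps)
qed

lemma slp_sign:
  assumes "Z x < Z y"
  shows "slp Z g x y < 0 \<longleftrightarrow> g y < g x" "slp Z g x y \<le> 0 \<longleftrightarrow> g y \<le> g x"
    "0 < slp Z g x y \<longleftrightarrow> g x < g y" "0 \<le> slp Z g x y \<longleftrightarrow> g x \<le> g y"
    "slp Z g x y = 0 \<longleftrightarrow> g x = g y"
  using assms unfolding slp_def by (auto simp: divide_simps)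

lemma zconv_left:
  assumes zc: "zconv Z g K" and K: "K = {x. p < x \<and> ereal x < q}" and m: "m \<in> K"
  shows "\<exists>b\<in>K. cmono {p<..<b} g"
proof -
  have Zm: "\<And>x y. x \<in> K \<Longrightarrow> y \<in> K \<Longrightarrow> x < y \<Longrightarrow> Z x < Z y" using zc unfolding zconv_def by auto
  have sub: "\<And>b u. b \<in> K \<Longrightarrow> u \<in> {p<..<b} \<Longrightarrow> u \<in> K"
    using K by auto (metis ereal_less_eq(3) le_less_trans less_imp_le)
  show ?thesis
  proof (cases "\<exists>x\<in>K. \<exists>y\<in>K. x < y \<and> g y < g x")
    case True
    then obtain x y where xy: "x \<in> K" "y \<in> K" "x < y" "g y < g x" by auto
    have "strict_antimono_on {p<..<x} g"
    proof (rule monotone_onI)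
      fix u v assume uv: "u \<in> {p<..<x}" "v \<in> {p<..<x}" "u < v"
      have uK: "u \<in> K" "v \<in> K" using sub[OF xy(1)] uv by auto
      have "slp Z g u v \<le> slp Z g u y" using zconv_slopes(1)[OF zc uK xy(2)] uv xy by auto
      also have "\<dots> \<le> slp Z g v y" using zconv_slopes(2)[OF zc uK xy(2)] uv xy by auto
      also have "\<dots> \<le> slp Z g x y" using zconv_slopes(2)[OF zc uK(2) xy(1) xy(2)] uv xy by auto
      also have "\<dots> < 0" using slp_sign(1)[where Z=Z, OF Zm[OF xy(1-3)]] xy by auto
      finally show "g v < g u" using slp_sign(1)[where Z=Z, OF Zm[OF uK uv(3)]] by auto
    qed
    then show ?thesis using xy unfolding cmono_def by blast
  next
    case False
    hence inc: "\<And>x y. x \<in> K \<Longrightarrow> y \<in> K \<Longrightarrow> x < y \<Longrightarrow> g x \<le> g y" by (meson not_le)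
    show ?thesis
    proof (cases "\<exists>x\<in>K. \<exists>y\<in>K. x < y \<and> g x = g y")
      case True
      then obtain x y where xy: "x \<in> K" "y \<in> K" "x < y" "g x = g y" by auto
      have "\<forall>u\<in>{p<..<x}. g u = g x"
      proof
        fix u assume u: "u \<in> {p<..<x}"
        have uK: "u \<in> K" using sub[OF xy(1)] u by auto
        have "slp Z g u x \<le> slp Z g u y" using zconv_slopes(1)[OF zc uK xy(1) xy(2)] u xy by auto
        also have "\<dots> \<le> slp Z g x y" using zconv_slopes(2)[OF zc uK xy(1) xy(2)] u xy by auto
        also have "\<dots> = 0" using slp_sign(5)[where Z=Z, OF Zm[OF xy(1-3)]] xy by auto
        finally have "g x \<le> g u" using slp_sign(2)[where Z=Z, OF Zm[OF uK xy(1)]] u by auto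
        moreover have "g u \<le> g x" using inc[OF uK xy(1)] u by auto
        ultimately show "g u = g x" by auto
      qed
      then show ?thesis using xy unfolding cmono_def by blast
    next
      case False
      hence "strict_mono_on K g" using inc by (intro monotone_onI) (metis order_less_le)
      hence "strict_mono_on {p<..<m} g" by (rule monotone_on_subset) (use sub m in blast)
      then show ?thesis using m unfolding cmono_def by blast
    qed
  qed
qed

lemma zconv_right:
  assumes zc: "zconv Z g K" and K: "K = {x. p < x \<and> ereal x < q}" and m: "m \<in> K"
  shows "\<exists>a\<in>K. cmono {x. a < x \<and> ereal x < q} g"
proof -
  have Zm: "\<And>x y. x \<in> K \<Longrightarrow> y \<in> K \<Longrightarrow> x < y \<Longrightarrow> Z x < Z y" using zc unfolding zconv_def by auto
  have sub: "\<And>a u. a \<in> K \<Longrightarrow> u \<in> {x. a < x \<and> ereal x < q} \<Longrightarrow> u \<in> K"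
    using K by auto
  show ?thesis
  proof (cases "\<exists>x\<in>K. \<exists>y\<in>K. x < y \<and> g x < g y")
    case True
    then obtain x y where xy: "x \<in> K" "y \<in> K" "x < y" "g x < g y" by auto
    have "strict_mono_on {x. y < x \<and> ereal x < q} g"
    proof (rule monotone_onI)
      fix u v assume uv: "u \<in> {x. y < x \<and> ereal x < q}" "v \<in> {x. y < x \<and> ereal x < q}" "u < v"
      have uK: "u \<in> K" "v \<in> K" using sub[OF xy(2)] uv by auto
      have "0 < slp Z g x y" using slp_sign(3)[where Z=Z, OF Zm[OF xy(1-3)]] xy by auto
      also have "\<dots> \<le> slp Z g x u" using zconv_slopes(1)[OF zc xy(1,2) uK(1)] uv xy by auto
      also have "\<dots> \<le> slp Z g y u" using zconv_slopes(2)[OF zc xy(1,2) uK(1)] uv xy by auto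
      also have "\<dots> \<le> slp Z g u v" using zconv_slopes(2)[OF zc xy(2) uK] uv xy
          zconv_slopes(1)[OF zc xy(2) uK] by auto
      finally show "g u < g v" using slp_sign(3)[where Z=Z, OF Zm[OF uK uv(3)]] by auto
    qed
    then show ?thesis using xy unfolding cmono_def by blast
  next
    case False
    hence dec: "\<And>x y. x \<in> K \<Longrightarrow> y \<in> K \<Longrightarrow> x < y \<Longrightarrow> g y \<le> g x" by (meson not_le)
    show ?thesis
    proof (cases "\<exists>x\<in>K. \<exists>y\<in>K. x < y \<and> g x = g y")
      case True
      then obtain x y where xy: "x \<in> K" "y \<in> K" "x < y" "g x = g y" by auto
      have "\<forall>u\<in>{x. y < x \<and> ereal x < q}. g u = g y"
      proof
        fix u assume u: "u \<in> {x. y < x \<and> ereal x < q}"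
        have uK: "u \<in> K" using sub[OF xy(2)] u by auto
        have "0 = slp Z g x y" using slp_sign(5)[where Z=Z, OF Zm[OF xy(1-3)]] xy by auto
        also have "\<dots> \<le> slp Z g x u" using zconv_slopes(1)[OF zc xy(1,2) uK] u xy by auto
        also have "\<dots> \<le> slp Z g y u" using zconv_slopes(2)[OF zc xy(1,2) uK] u xy by auto
        finally have "g y \<le> g u" using slp_sign(4)[where Z=Z, OF Zm[OF xy(2) uK]] u by auto
        moreover have "g u \<le> g y" using dec[OF xy(2) uK] u by auto
        ultimately show "g u = g y" by auto
      qed
      then show ?thesis using xy unfolding cmono_def by blast
    next
      case False
      hence "strict_antimono_on K g" using dec by (intro monotone_onI) (metis order_less_le)
      hence "strict_antimono_on {x. m < x \<and> ereal x < q} g" by (rule monotone_on_subset) (use sub m in blast)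
      then show ?thesis using m unfolding cmono_def by blast
    qed
  qed
qed

lemma cmono_uminus: "cmono S (\<lambda>x. - g x) \<Longrightarrow> cmono S g"
  unfolding cmono_def monotone_on_def by (metis minus_less_iff neg_less_iff_less minus_minus)



lemma lip_abs:
  assumes "L \<ge> 0" and lip: "\<And>u v. u \<in> {a..b} \<Longrightarrow> v \<in> {a..b} \<Longrightarrow> \<bar>f v - f u\<bar> \<le> L * \<bar>v - u\<bar>"
  shows "abs_continuous_on a b f"
  unfolding abs_continuous_on_def
proof (intro allI impI)
  fix e :: real assume e: "e > 0"
  show "\<exists>\<delta>>0. \<forall>n u v. (\<forall>i<n. a \<le> u i \<and> u i \<le> v i \<and> v i \<le> b) \<and>
        (\<forall>i<n. \<forall>j<n. i \<noteq> j \<longrightarrow> v i \<le> u j \<or> v j \<le> u i) \<and> (\<Sum>i<n. v i - u i) < \<delta>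
        \<longrightarrow> (\<Sum>i<n. \<bar>f (v i) - f (u i)\<bar>) < e"
  proof (rule exI[of _ "e / (L+1)"], intro conjI allI impI)
    show "e / (L+1) > 0" using e assms by auto
    fix n u v assume H: "(\<forall>i<n. a \<le> u i \<and> u i \<le> v i \<and> v i \<le> b) \<and>
        (\<forall>i<n. \<forall>j<n. i \<noteq> j \<longrightarrow> v i \<le> u j \<or> v j \<le> u i) \<and> (\<Sum>i<n. v i - u i) < e / (L+1)"
    have "(\<Sum>i<n. \<bar>f (v i) - f (u i)\<bar>) \<le> (\<Sum>i<n. L * (v i - u i))"
    proof (rule sum_mono)
      fix i assume "i \<in> {..<n}"
      then have "a \<le> u i \<and> u i \<le> v i \<and> v i \<le> b" using H by auto
      then show "\<bar>f (v i) - f (u i)\<bar> \<le> L * (v i - u i)" using lip[of "u i" "v i"] by auto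
    qed
    also have "\<dots> = L * (\<Sum>i<n. v i - u i)" by (simp add: sum_distrib_left)
    also have "\<dots> \<le> L * (e / (L+1))" using H assms by (intro mult_left_mono) auto
    also have "\<dots> < e" using e assms by (simp add: field_simps)
    finally show "(\<Sum>i<n. \<bar>f (v i) - f (u i)\<bar>) < e" .
  qed
qed

lemma c1_lip:
  fixes F F' :: "real \<Rightarrow> real"
  assumes der: "\<And>x. x \<in> {a..b} \<Longrightarrow> (F has_real_derivative F' x) (at x)"
    and cont: "continuous_on {a..b} F'"
  shows "\<exists>K\<ge>0. \<forall>u\<in>{a..b}. \<forall>v\<in>{a..b}. \<bar>F v - F u\<bar> \<le> K * \<bar>v - u\<bar>"
proof -
  obtain B where B: "B \<ge> 0" "\<And>x. x \<in> {a..b} \<Longrightarrow> norm (F' x) \<le> B"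
    using continuous_on_compact_bound[OF compact_Icc cont] by blast
  have *: "\<bar>F v - F u\<bar> \<le> B * \<bar>v - u\<bar>" if uv: "u \<in> {a..b}" "v \<in> {a..b}" "u < v" for u v
  proof -
    obtain z where z: "u < z" "z < v" "F v - F u = (v - u) * F' z"
      using MVT2[OF uv(3), of F F'] der uv by auto
    have "z \<in> {a..b}" using z uv by auto
    then have "\<bar>F' z\<bar> \<le> B" using B by auto
    then show ?thesis using z uv by (simp add: abs_mult mult.commute mult_right_mono)
  qed
  show ?thesis
  proof (rule exI[of _ B], intro conjI ballI)
    fix u v assume uv: "u \<in> {a..b}" "v \<in> {a..b}"
    show "\<bar>F v - F u\<bar> \<le> B * \<bar>v - u\<bar>"
      using *[OF uv] *[OF uv(2,1)] by (cases u v rule: linorder_cases) (auto simp: abs_minus_commute)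
  qed (use B in auto)
qed

lemma left_filter_nontriv:
  assumes "x0 \<noteq> -\<infinity>" "ereal T < x0" "{x. T < x \<and> ereal x < x0} \<subseteq> D"
  shows "left_filter x0 D \<noteq> bot"
proof
  assume "left_filter x0 D = bot"
  then have "eventually (\<lambda>x. False) (left_filter x0 D)" by simp
  then have "\<exists>a. ereal a < x0 \<and> (\<forall>x\<in>D. a < x \<and> ereal x < x0 \<longrightarrow> False)"
    using ev_left[OF assms(1), of "\<lambda>x. False" D] by simp
  then obtain a where a: "ereal a < x0" "\<forall>x\<in>D. a < x \<and> ereal x < x0 \<longrightarrow> False"
    by blast
  define c where "c = max a T"
  have c: "ereal c < x0" using a assms by (auto simp: c_def max_def)
  obtain x where x: "c < x" "ereal x < x0"
  proof (cases x0)
    case (real r) then show ?thesis using c that[of "(c+r)/2"] by auto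
  next
    case PInf then show ?thesis using that[of "c+1"] by auto
  qed (use assms in auto)
  then show False using a assms(3) by (auto simp: c_def)
qed

lemma mono_lim:
  assumes x0: "x0 \<noteq> -\<infinity>" and m: "mono_on {x. a < x \<and> ereal x < x0} g" and ax: "ereal a < x0"
  shows "\<exists>L. ((\<lambda>x. ereal (g x)) \<longlongrightarrow> L) (left_filter x0 D)"
proof -
  define A where "A = {x. a < x \<and> ereal x < x0}"
  define L where "L = (SUP x\<in>A. ereal (g x))"
  have "((\<lambda>x. ereal (g x)) \<longlongrightarrow> L) (left_filter x0 D)"
  proof (rule order_tendstoI)
    fix y assume "y < L"
    then obtain x where x: "x \<in> A" "y < ereal (g x)" unfolding L_def less_SUP_iff by blast
    show "eventually (\<lambda>z. y < ereal (g z)) (left_filter x0 D)"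
      unfolding ev_left[OF x0]
    proof (rule exI[of _ x], intro conjI ballI impI)
      show "ereal x < x0" using x A_def by auto
      fix z assume "z \<in> D" "x < z \<and> ereal z < x0"
      then have "g x \<le> g z" using m x unfolding A_def mono_on_def by auto
      then show "y < ereal (g z)" using x by (meson ereal_less_eq(3) order_less_le_trans)
    qed
  next
    fix y assume yL: "L < y"
    show "eventually (\<lambda>z. ereal (g z) < y) (left_filter x0 D)"
      unfolding ev_left[OF x0]
    proof (rule exI[of _ a], intro conjI ballI impI)
      show "ereal a < x0" using ax .
      fix z assume "z \<in> D" "a < z \<and> ereal z < x0"
      then have "z \<in> A" using A_def by auto
      then have "ereal (g z) \<le> L" unfolding L_def by (rule SUP_upper)
      then show "ereal (g z) < y" using yL by auto
    qed
  qed
  then show ?thesis by blast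
qed

lemma cmono_lim:
  assumes x0: "x0 \<noteq> -\<infinity>" and c: "cmono {x. a < x \<and> ereal x < x0} g" and ax: "ereal a < x0"
  shows "\<exists>L. ((\<lambda>x. ereal (g x)) \<longlongrightarrow> L) (left_filter x0 D)"
  using c unfolding cmono_def
proof (elim disjE exE)
  fix c assume "\<forall>x\<in>{x. a < x \<and> ereal x < x0}. g x = c"
  then have "eventually (\<lambda>x. ereal (g x) = ereal c) (left_filter x0 D)"
    unfolding ev_left[OF x0] using ax by auto
  then show ?thesis by (blast intro: tendsto_eventually)
next
  assume "strict_mono_on {x. a < x \<and> ereal x < x0} g"
  then have "mono_on {x. a < x \<and> ereal x < x0} g" by (rule strict_mono_on_imp_mono_on)
  then show ?thesis by (rule mono_lim[OF x0 _ ax])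
next
  assume "strict_antimono_on {x. a < x \<and> ereal x < x0} g"
  then have "mono_on {x. a < x \<and> ereal x < x0} (\<lambda>x. - g x)"
    unfolding monotone_on_def by (auto simp: order_le_less)
  then obtain L where "((\<lambda>x. ereal (- g x)) \<longlongrightarrow> L) (left_filter x0 D)"
    using mono_lim[OF x0 _ ax] by blast
  then have "((\<lambda>x. - ereal (- g x)) \<longlongrightarrow> - L) (left_filter x0 D)" by (rule tendsto_uminus_ereal)
  then show ?thesis by auto
qed



lemma zconv_subset: "zconv Z g K \<Longrightarrow> K' \<subseteq> K \<Longrightarrow> zconv Z g K'"
  unfolding zconv_def by blast

lemma zconv_affine:
  assumes "zconv Z g K" shows "zconv Z (\<lambda>x. g x + a1 + a2 * Z x) K"
proof -
  have "(Z x2 - Z x1) * (g x3 + a1 + a2 * Z x3 - (g x1 + a1 + a2 * Z x1)) -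
           (Z x3 - Z x1) * (g x2 + a1 + a2 * Z x2 - (g x1 + a1 + a2 * Z x1))
      = (Z x2 - Z x1) * (g x3 - g x1) - (Z x3 - Z x1) * (g x2 - g x1)" for x1 x2 x3
    by (simp add: algebra_simps)
  then show ?thesis using assms unfolding zconv_def by simp
qed

lemma moeb_z:
  fixes c1 c2 Ya Yb :: real
  assumes "c1 + c2*Ya \<noteq> 0" "c1 + c2*Yb \<noteq> 0"
  shows "(c1*Yb - c2)/(c1+c2*Yb) - (c1*Ya - c2)/(c1+c2*Ya) = (c1^2+c2^2)*(Yb-Ya)/((c1+c2*Ya)*(c1+c2*Yb))"
  using assms by (simp add: field_simps power2_eq_square)

lemma sfac: "(A::real)*(s*a - s*b) - B*(s*c - s*b) = s*(A*(a-b) - B*(c-b))"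
  by algebra

lemma zconv_moeb:
  assumes zc: "zconv Y G K" and c: "c1 \<noteq> 0 \<or> c2 \<noteq> 0"
    and sg: "s = 1 \<or> s = -1" and l: "\<And>x. x \<in> K \<Longrightarrow> 0 < s * (c1 + c2 * Y x)"
  shows "zconv (\<lambda>x. (c1 * Y x - c2) / (c1 + c2 * Y x)) (\<lambda>x. s * (G x / (c1 + c2 * Y x))) K"
proof -
  have k: "c1^2 + c2^2 > 0" using c by (auto simp: add_pos_nonneg add_nonneg_pos)
  have ln: "\<And>x. x \<in> K \<Longrightarrow> c1 + c2 * Y x \<noteq> 0" using l by fastforce
  have lp: "\<And>x y. x \<in> K \<Longrightarrow> y \<in> K \<Longrightarrow> 0 < (c1 + c2 * Y x) * (c1 + c2 * Y y)"
  proof -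
    fix x y assume "x \<in> K" "y \<in> K"
    then have "0 < (s * (c1 + c2 * Y x)) * (s * (c1 + c2 * Y y))" using l by auto
    then show "0 < (c1 + c2 * Y x) * (c1 + c2 * Y y)" using sg by (auto simp: algebra_simps)
  qed
  show ?thesis
    unfolding zconv_def
  proof (intro conjI ballI impI)
    fix x y assume xy: "x \<in> K" "y \<in> K" "x < y"
    have "Y x < Y y" using zc xy unfolding zconv_def by auto
    then have "0 < (c1^2+c2^2)*(Y y-Y x)/((c1+c2*Y x)*(c1+c2*Y y))"
      using k lp[OF xy(1,2)] by auto
    then show "(c1 * Y x - c2) / (c1 + c2 * Y x) < (c1 * Y y - c2) / (c1 + c2 * Y y)"
      using moeb_z[OF ln[OF xy(1)] ln[OF xy(2)]] by simp
  next
    fix x1 x2 x3 assume xs: "x1 \<in> K" "x2 \<in> K" "x3 \<in> K" "x1 < x2 \<and> x2 < x3"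
    define D where "D = (Y x2 - Y x1) * (G x3 - G x1) - (Y x3 - Y x1) * (G x2 - G x1)"
    have D: "0 \<le> D" using zc xs unfolding zconv_def D_def by blast
    have pos: "0 < s * ((c1+c2*Y x1)*(c1+c2*Y x2)*(c1+c2*Y x3))"
    proof -
      have "0 < (s * (c1 + c2 * Y x1)) * ((c1+c2*Y x2)*(c1+c2*Y x3))"
        using l[OF xs(1)] lp[OF xs(2,3)] by simp
      then show ?thesis by (simp add: algebra_simps)
    qed
    have eq: "((c1*Y x2 - c2)/(c1+c2*Y x2) - (c1*Y x1 - c2)/(c1+c2*Y x1)) * (G x3/(c1+c2*Y x3) - G x1/(c1+c2*Y x1))
       - ((c1*Y x3 - c2)/(c1+c2*Y x3) - (c1*Y x1 - c2)/(c1+c2*Y x1)) * (G x2/(c1+c2*Y x2) - G x1/(c1+c2*Y x1))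
       = (c1^2+c2^2) * D / ((c1+c2*Y x1)*(c1+c2*Y x2)*(c1+c2*Y x3))"
      unfolding D_def by (rule moeb) (use ln xs in auto)
    have fin: "0 \<le> s * ((c1^2+c2^2) * D / ((c1+c2*Y x1)*(c1+c2*Y x2)*(c1+c2*Y x3)))"
    proof -
      have "0 \<le> (c1^2+c2^2) * D / (s * ((c1+c2*Y x1)*(c1+c2*Y x2)*(c1+c2*Y x3)))"
        using pos k D by simp
      then show ?thesis using sg by auto
    qed
    then show "0 \<le> ((c1 * Y x2 - c2) / (c1 + c2 * Y x2) - (c1 * Y x1 - c2) / (c1 + c2 * Y x1)) *
           (s * (G x3 / (c1 + c2 * Y x3)) - s * (G x1 / (c1 + c2 * Y x1))) -
           ((c1 * Y x3 - c2) / (c1 + c2 * Y x3) - (c1 * Y x1 - c2) / (c1 + c2 * Y x1)) *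
           (s * (G x2 / (c1 + c2 * Y x2)) - s * (G x1 / (c1 + c2 * Y x1)))"
      unfolding sfac eq using fin by simp
  qed
qed

lemma cmono_s: "s = 1 \<or> s = -1 \<Longrightarrow> cmono S (\<lambda>x. s * g x) \<Longrightarrow> cmono S g"
  by (auto intro: cmono_uminus)

lemma cmono_cong: "(\<And>x. x \<in> S \<Longrightarrow> g x = g' x) \<Longrightarrow> cmono S g' \<Longrightarrow> cmono S g"
  unfolding cmono_def monotone_on_def by auto

lemma moeb_left:
  assumes zc: "zconv Y G K" and c: "c1 \<noteq> 0 \<or> c2 \<noteq> 0"
    and sg: "s = 1 \<or> s = -1" and l: "\<And>x. x \<in> K \<Longrightarrow> 0 < s * (c1 + c2 * Y x)"
    and K: "K = {x. p < x \<and> ereal x < q}" and m: "m \<in> K"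
  shows "\<exists>b\<in>K. cmono {p<..<b} (\<lambda>x. G x / (c1 + c2 * Y x))"
proof -
  have "zconv (\<lambda>x. (c1 * Y x - c2) / (c1 + c2 * Y x)) (\<lambda>x. s * (G x / (c1 + c2 * Y x))) K"
    by (rule zconv_moeb[OF zc c sg l])
  from zconv_left[OF this K m] obtain b where "b \<in> K" "cmono {p<..<b} (\<lambda>x. s * (G x / (c1 + c2 * Y x)))" by blast
  then show ?thesis using cmono_s[OF sg, of "{p<..<b}" "\<lambda>x. G x / (c1 + c2 * Y x)"] by auto
qed

lemma moeb_right:
  assumes zc: "zconv Y G K" and c: "c1 \<noteq> 0 \<or> c2 \<noteq> 0"
    and sg: "s = 1 \<or> s = -1" and l: "\<And>x. x \<in> K \<Longrightarrow> 0 < s * (c1 + c2 * Y x)"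
    and K: "K = {x. p < x \<and> ereal x < q}" and m: "m \<in> K"
  shows "\<exists>a\<in>K. cmono {x. a < x \<and> ereal x < q} (\<lambda>x. G x / (c1 + c2 * Y x))"
proof -
  have "zconv (\<lambda>x. (c1 * Y x - c2) / (c1 + c2 * Y x)) (\<lambda>x. s * (G x / (c1 + c2 * Y x))) K"
    by (rule zconv_moeb[OF zc c sg l])
  from zconv_right[OF this K m] obtain a where "a \<in> K" "cmono {x. a < x \<and> ereal x < q} (\<lambda>x. s * (G x / (c1 + c2 * Y x)))" by blast
  then show ?thesis using cmono_s[OF sg, of "{x. a < x \<and> ereal x < q}" "\<lambda>x. G x / (c1 + c2 * Y x)"] by auto
qed

lemma det_id:
  fixes a1 a2 a3 y1 y2 y3 h1 h2 h3 :: real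
  shows "a1 * ((a2*y2) * (a3*h3) - (a3*y3) * (a2*h2)) - a2 * ((a1*y1) * (a3*h3) - (a3*y3) * (a1*h1))
         + a3 * ((a1*y1) * (a2*h2) - (a2*y2) * (a1*h1))
       = a1*a2*a3 * ((y2 - y1) * (h3 - h1) - (y3 - y1) * (h2 - h1))"
  by algebra

lemma Aeq_lemma: fixes h h0 y y0 :: real assumes "y - y0 \<noteq> 0"
  shows "h - y * ((h - h0) / (y - y0)) = h * (- y0 / (y - y0)) + y * h0 / (y - y0)"
proof -
  define d where "d = y - y0"
  have d: "d \<noteq> 0" using assms d_def by auto
  have "h - y * ((h - h0) / d) = h * (- y0 / d) + y * h0 / d"
    using d by (simp add: field_simps, unfold d_def, algebra)
  then show ?thesis unfolding d_def .
qed

lemma ereal_lt_trans: "(a::real) \<le> b \<Longrightarrow> ereal b < x0 \<Longrightarrow> ereal a < x0"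
  by (meson ereal_less_eq(3) le_less_trans)

lemma exists_between: "ereal c < x0 \<Longrightarrow> \<exists>z. c < z \<and> ereal z < x0"
  using ereal_dense2 by (metis ereal_less_eq(3) less_ereal.simps(1))



theorem theorem6p1:
  fixes x0 :: ereal and T :: real
    and \<phi>1 \<phi>2 \<phi>1' \<phi>2' f :: "real \<Rightarrow> real"
  defines "I \<equiv> {x. T \<le> x \<and> ereal x < x0}"
    and "J \<equiv> {x. T < x \<and> ereal x < x0}"
    and "f1s \<equiv> (\<lambda>t. (f t * \<phi>2' t - deriv f t * \<phi>2 t) / (\<phi>1 t * \<phi>2' t - \<phi>1' t * \<phi>2 t))"
    and "f2s \<equiv> (\<lambda>t. - (f t * \<phi>1' t - deriv f t * \<phi>1 t) / (\<phi>1 t * \<phi>2' t - \<phi>1' t * \<phi>2 t))"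
    and "Fs \<equiv> (\<lambda>t. \<phi>1 T * ((f t * \<phi>2' t - deriv f t * \<phi>2 t) / (\<phi>1 t * \<phi>2' t - \<phi>1' t * \<phi>2 t))
                   + \<phi>2 T * (- (f t * \<phi>1' t - deriv f t * \<phi>1 t) / (\<phi>1 t * \<phi>2' t - \<phi>1' t * \<phi>2 t)))"
  assumes "x0 \<noteq> -\<infinity>"
    and "ereal T < x0"
    and d1: "\<And>x. x \<in> I \<Longrightarrow> (\<phi>1 has_real_derivative \<phi>1' x) (at x within I)"
    and d2: "\<And>x. x \<in> I \<Longrightarrow> (\<phi>2 has_real_derivative \<phi>2' x) (at x within I)"
    and "continuous_on I \<phi>1'" and "continuous_on I \<phi>2'"
    and "\<phi>2 \<in> o[left_filter x0 I](\<phi>1)"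
    and "\<And>x. x \<in> I \<Longrightarrow> \<phi>1 x > 0"
    and "\<And>x. x \<in> I \<Longrightarrow> \<phi>2 x \<noteq> 0"
    and "\<And>x. x \<in> I \<Longrightarrow> \<phi>1 x * \<phi>2' x - \<phi>1' x * \<phi>2 x > 0"
    and "gen_convex \<phi>1 \<phi>2 J f"
  shows
    \<comment> \<open>(i)\<close>
    "(\<forall>a b. T < a \<and> a \<le> b \<and> ereal b < x0 \<longrightarrow> abs_continuous_on a b f)
     \<comment> \<open>(ii)\<close>
     \<and> (\<exists>N. N \<in> null_sets lebesgue \<and>
          (\<forall>t \<in> J - N. f differentiable (at t)) \<and>
          mono_on (J - N) f2s \<and>
          ((mono_on (J - N) f1s \<and> antimono_on (J - N) Fs) \<or>
           (antimono_on (J - N) f1s \<and> mono_on (J - N) Fs)) \<and>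
          mono_on (J - N) (\<lambda>t. sgn (\<phi>2 t) * Fs t))
     \<comment> \<open>(iii)\<close>
     \<and> (\<forall>a1 a2 c1 c2 :: real. (c1 \<noteq> 0 \<or> c2 \<noteq> 0) \<longrightarrow>
          (let g = (\<lambda>x. (f x + a1 * \<phi>1 x + a2 * \<phi>2 x) / (c1 * \<phi>1 x + c2 * \<phi>2 x))
           in (\<exists>b. T < b \<and> ereal b \<le> x0 \<and>
                 (\<forall>x\<in>{T<..<b}. c1 * \<phi>1 x + c2 * \<phi>2 x \<noteq> 0) \<and>
                 ((\<exists>c. \<forall>x\<in>{T<..<b}. g x = c) \<or>
                  strict_mono_on {T<..<b} g \<or> strict_antimono_on {T<..<b} g)) \<and>
              (\<exists>a. T < a \<and> ereal a < x0 \<and>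
                 (\<forall>x\<in>{x. a < x \<and> ereal x < x0}. c1 * \<phi>1 x + c2 * \<phi>2 x \<noteq> 0) \<and>
                 ((\<exists>c. \<forall>x\<in>{x. a < x \<and> ereal x < x0}. g x = c) \<or>
                  strict_mono_on {x. a < x \<and> ereal x < x0} g \<or>
                  strict_antimono_on {x. a < x \<and> ereal x < x0} g))))
     \<comment> \<open>(iv)\<close>
     \<and> (\<exists>L :: ereal.
          ((\<lambda>x. ereal (f x / \<phi>1 x)) \<longlongrightarrow> L) (left_filter x0 J) \<and>
          ((\<lambda>x. ereal (deriv (\<lambda>y. f y / \<phi>2 y) x / deriv (\<lambda>y. \<phi>1 y / \<phi>2 y) x)) \<longlongrightarrow> L)
            (left_filter x0 {x \<in> J. f differentiable (at x)}))"
proof -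
  note x0 = assms(6) and Tx0 = assms(7) and c1' = assms(10) and c2' = assms(11) and lo = assms(12)
    and p1 = assms(13) and p2 = assms(14) and Wp = assms(15) and gc = assms(16)
  define Y where "Y = (\<lambda>x. \<phi>2 x / \<phi>1 x)"
  define H where "H = (\<lambda>x. f x / \<phi>1 x)"
  define Y' where "Y' = (\<lambda>x. (\<phi>2' x * \<phi>1 x - \<phi>2 x * \<phi>1' x) / (\<phi>1 x * \<phi>1 x))"
  have TI: "T \<in> I" using Tx0 I_def by auto
  have JI: "J \<subseteq> I" using I_def J_def by auto
  have JIx: "x \<in> I" if "x \<in> J" for x using JI that by blast
  have IJ: "x \<in> I \<Longrightarrow> T < x \<Longrightarrow> x \<in> J" for x using I_def J_def by auto
  have openJ: "open J"
  proof (cases x0)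
    case (real r)
    then have "J = {T<..<r}" unfolding J_def by auto
    then show ?thesis by simp
  next
    case PInf
    then have "J = {T<..}" unfolding J_def by auto
    then show ?thesis by simp
  qed (use x0 in auto)
  have d1J: "(\<phi>1 has_real_derivative \<phi>1' x) (at x)" if "x \<in> J" for x
    using has_field_derivative_subset[OF d1[of x] JI] that JI at_within_open[OF that openJ] by auto
  have d2J: "(\<phi>2 has_real_derivative \<phi>2' x) (at x)" if "x \<in> J" for x
    using has_field_derivative_subset[OF d2[of x] JI] that JI at_within_open[OF that openJ] by auto
  have dY: "(Y has_real_derivative Y' x) (at x within I)" if "x \<in> I" for x
    unfolding Y_def Y'_def using DERIV_divide[OF d2[OF that] d1[OF that]] p1[OF that] by auto
  have dYJ: "(Y has_real_derivative Y' x) (at x)" if "x \<in> J" for x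
    using has_field_derivative_subset[OF dY[of x] JI] that JI at_within_open[OF that openJ] by auto
  have Y'p: "Y' x > 0" if "x \<in> I" for x
  proof -
    have "\<phi>2' x * \<phi>1 x - \<phi>2 x * \<phi>1' x > 0" using Wp[OF that] by (simp add: algebra_simps)
    then show ?thesis unfolding Y'_def using p1[OF that] by simp
  qed
  have contY: "continuous_on I Y" by (rule DERIV_continuous_on[OF dY])
  have cont1: "continuous_on I \<phi>1" by (rule DERIV_continuous_on[OF d1])
  have cont2: "continuous_on I \<phi>2" by (rule DERIV_continuous_on[OF d2])
  have Ymono: "Y x < Y y" if "x \<in> I" "y \<in> I" "x < y" for x y
  proof (rule DERIV_pos_imp_increasing_open[OF that(3)])
    fix z assume "x < z" "z < y"
    then have "z \<in> J" using that I_def J_def by auto (meson ereal_less_eq(3) le_less_trans less_imp_le)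
    then show "\<exists>d. (Y has_real_derivative d) (at z) \<and> 0 < d" using dYJ Y'p JI by blast
  next
    have "{x..y} \<subseteq> I" using that I_def by auto (meson ereal_less_eq(3) le_less_trans)
    then show "continuous_on {x..y} Y" using contY continuous_on_subset by blast
  qed
  have Ylim: "(Y \<longlongrightarrow> 0) (left_filter x0 I)"
    unfolding Y_def by (rule smalloD_tendsto[OF lo])
  have Yneg: "Y x < 0" if "x \<in> I" for x
  proof (rule ccontr)
    assume "\<not> Y x < 0"
    moreover have "Y x \<noteq> 0" unfolding Y_def using p1[OF that] p2[OF that] by auto
    ultimately have pos: "Y x > 0" by auto
    have "eventually (\<lambda>z. Y z < Y x) (left_filter x0 I)" using order_tendstoD(2)[OF Ylim pos] .
    then obtain a where a: "ereal a < x0" "\<forall>z\<in>I. a < z \<and> ereal z < x0 \<longrightarrow> Y z < Y x"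
      using ev_left[OF x0, of "\<lambda>z. Y z < Y x" I] by auto
    have "ereal (max a x) < x0" using a that I_def by (auto simp: max_def)
    then obtain z where z: "max a x < z" "ereal z < x0" using exists_between by blast
    then have zI: "z \<in> I" using that I_def by auto
    then have "Y z < Y x" using a z by auto
    moreover have "Y x < Y z" using Ymono[OF that zI] z by auto
    ultimately show False by auto
  qed
  have zc: "zconv Y H J"
    unfolding zconv_def
  proof (intro conjI ballI impI)
    fix x y assume "x \<in> J" "y \<in> J" "x < y"
    then show "Y x < Y y" using Ymono JI by auto
  next
    fix x1 x2 x3 assume xs: "x1 \<in> J" "x2 \<in> J" "x3 \<in> J" "x1 < x2 \<and> x2 < x3"
    have e2: "\<phi>2 x = \<phi>1 x * Y x" "f x = \<phi>1 x * H x" if "x \<in> J" for x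
      using p1[of x] JI that unfolding Y_def H_def by auto
    have "0 \<le> \<phi>1 x1 * (\<phi>2 x2 * f x3 - \<phi>2 x3 * f x2) - \<phi>1 x2 * (\<phi>2 x1 * f x3 - \<phi>2 x3 * f x1)
           + \<phi>1 x3 * (\<phi>2 x1 * f x2 - \<phi>2 x2 * f x1)"
      using gc xs unfolding gen_convex_def by blast
    also have "\<dots> = \<phi>1 x1 * \<phi>1 x2 * \<phi>1 x3 * ((Y x2 - Y x1) * (H x3 - H x1) - (Y x3 - Y x1) * (H x2 - H x1))"
      unfolding e2[OF xs(1)] e2[OF xs(2)] e2[OF xs(3)] by (rule det_id)
    finally have fin: "0 \<le> \<phi>1 x1 * \<phi>1 x2 * \<phi>1 x3 * ((Y x2 - Y x1) * (H x3 - H x1) - (Y x3 - Y x1) * (H x2 - H x1))" .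
    have xI: "x1 \<in> I" "x2 \<in> I" "x3 \<in> I" using JI xs by auto
    have pp: "0 < \<phi>1 x1 * \<phi>1 x2 * \<phi>1 x3" using mult_pos_pos[OF mult_pos_pos[OF p1[OF xI(1)] p1[OF xI(2)]] p1[OF xI(3)]] .
    show "0 \<le> (Y x2 - Y x1) * (H x3 - H x1) - (Y x3 - Y x1) * (H x2 - H x1)"
      using fin pp by (simp add: zero_le_mult_iff)
  qed
  have partiii: "\<forall>a1 a2 c1 c2 :: real. (c1 \<noteq> 0 \<or> c2 \<noteq> 0) \<longrightarrow>
          (let g = (\<lambda>x. (f x + a1 * \<phi>1 x + a2 * \<phi>2 x) / (c1 * \<phi>1 x + c2 * \<phi>2 x))
           in (\<exists>b. T < b \<and> ereal b \<le> x0 \<and>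
                 (\<forall>x\<in>{T<..<b}. c1 * \<phi>1 x + c2 * \<phi>2 x \<noteq> 0) \<and>
                 ((\<exists>c. \<forall>x\<in>{T<..<b}. g x = c) \<or>
                  strict_mono_on {T<..<b} g \<or> strict_antimono_on {T<..<b} g)) \<and>
              (\<exists>a. T < a \<and> ereal a < x0 \<and>
                 (\<forall>x\<in>{x. a < x \<and> ereal x < x0}. c1 * \<phi>1 x + c2 * \<phi>2 x \<noteq> 0) \<and>
                 ((\<exists>c. \<forall>x\<in>{x. a < x \<and> ereal x < x0}. g x = c) \<or>
                  strict_mono_on {x. a < x \<and> ereal x < x0} g \<or>
                  strict_antimono_on {x. a < x \<and> ereal x < x0} g)))"
  proof (intro allI impI)
    fix a1 a2 c1 c2 :: real assume c: "c1 \<noteq> 0 \<or> c2 \<noteq> 0"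
    define G where "G = (\<lambda>x. H x + a1 + a2 * Y x)"
    define g where "g = (\<lambda>x. (f x + a1 * \<phi>1 x + a2 * \<phi>2 x) / (c1 * \<phi>1 x + c2 * \<phi>2 x))"
    have zG: "zconv Y G J" unfolding G_def by (rule zconv_affine[OF zc])
    have nd: "f x + a1 * \<phi>1 x + a2 * \<phi>2 x = \<phi>1 x * G x"
        "c1 * \<phi>1 x + c2 * \<phi>2 x = \<phi>1 x * (c1 + c2 * Y x)" if "x \<in> I" for x
      using p1[OF that] unfolding G_def H_def Y_def by (simp_all add: field_simps)
    have geq: "g x = G x / (c1 + c2 * Y x)" if "x \<in> I" for x
      unfolding g_def nd[OF that] using p1[OF that] by simp
    have den: "c1 * \<phi>1 x + c2 * \<phi>2 x \<noteq> 0" if "x \<in> I" "0 < s * (c1 + c2 * Y x)" for x s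
      unfolding nd[OF that(1)] using p1[OF that(1)] that(2) by auto
    obtain m0 where m0: "T < m0" "ereal m0 < x0" using exists_between[OF Tx0] by blast
    have m0J: "m0 \<in> J" using m0 J_def by auto
    have sub_I: "x \<in> I" if "T < x" "x < b0" "b0 \<in> J" for x b0
      using that J_def I_def by auto (meson ereal_less_eq(3) le_less_trans less_imp_le)
    have left: "\<exists>b. T < b \<and> ereal b \<le> x0 \<and> (\<forall>x\<in>{T<..<b}. c1 * \<phi>1 x + c2 * \<phi>2 x \<noteq> 0) \<and> cmono {T<..<b} g"
    proof -
      obtain b0 s where b0: "b0 \<in> J" and s: "s = 1 \<or> s = -1"
        and sl: "\<And>x. x \<in> {T<..<b0} \<Longrightarrow> 0 < s * (c1 + c2 * Y x)"
      proof (cases "c1 + c2 * Y T = 0")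
        case True
        then have c2: "c2 \<noteq> 0" using c by auto
        define s where "s = (if c2 > 0 then 1 else -1::real)"
        show ?thesis
        proof (rule that[of m0 s])
          fix x assume x: "x \<in> {T<..<m0}"
          then have "x \<in> I" using sub_I m0J by auto
          then have "Y T < Y x" using Ymono TI x by auto
          moreover have "c1 + c2 * Y x = c2 * (Y x - Y T)" using True by (simp add: algebra_simps)
          ultimately show "0 < s * (c1 + c2 * Y x)" using c2 unfolding s_def
            by (auto simp: mult_pos_pos mult_neg_neg mult_neg_pos)
        qed (use m0J s_def in auto)
      next
        case False
        define s where "s = (if c1 + c2 * Y T > 0 then 1 else -1::real)"
        have sT: "0 < s * (c1 + c2 * Y T)" using False unfolding s_def by (auto simp: mult_neg_neg)
        have "continuous_on I (\<lambda>x. s * (c1 + c2 * Y x))" by (intro continuous_intros contY)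
        then have "((\<lambda>x. s * (c1 + c2 * Y x)) \<longlongrightarrow> s * (c1 + c2 * Y T)) (at T within I)"
          using TI unfolding continuous_on_def by blast
        from order_tendstoD(1)[OF this sT]
        obtain d where d: "d > 0" "\<And>x. x \<in> I \<Longrightarrow> x \<noteq> T \<Longrightarrow> dist x T < d \<Longrightarrow> 0 < s * (c1 + c2 * Y x)"
          unfolding eventually_at by blast
        define b0 where "b0 = min (T + d) m0"
        have b0J: "b0 \<in> J" unfolding b0_def using m0 d J_def
          by (auto simp: min_def) (meson ereal_less_eq(3) le_less_trans)
        show ?thesis
        proof (rule that[of b0 s])
          fix x assume x: "x \<in> {T<..<b0}"
          then have "x \<in> I" using sub_I b0J by auto
          moreover have "dist x T < d" using x unfolding b0_def dist_real_def by auto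
          ultimately show "0 < s * (c1 + c2 * Y x)" using d x by auto
        qed (use b0J s_def in auto)
      qed
      define K where "K = {x. T < x \<and> ereal x < ereal b0}"
      have KJ: "K \<subseteq> J" unfolding K_def using b0 J_def by auto (meson ereal_less_eq(3) le_less_trans less_imp_le)
      have mK: "(T + b0) / 2 \<in> K" unfolding K_def using b0 J_def by auto
      have lK: "\<And>x. x \<in> K \<Longrightarrow> 0 < s * (c1 + c2 * Y x)" using sl unfolding K_def by auto
      from moeb_left[OF zconv_subset[OF zG KJ] c s lK K_def mK]
      obtain b where b: "b \<in> K" "cmono {T<..<b} (\<lambda>x. G x / (c1 + c2 * Y x))" by blast
      have bI: "x \<in> {T<..<b} \<Longrightarrow> x \<in> I" for x using b KJ JI sub_I[of x b] by auto
      have "cmono {T<..<b} g" by (rule cmono_cong[OF _ b(2)]) (use geq bI in auto)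
      moreover have "\<forall>x\<in>{T<..<b}. c1 * \<phi>1 x + c2 * \<phi>2 x \<noteq> 0"
      proof
        fix x assume x: "x \<in> {T<..<b}"
        have "0 < s * (c1 + c2 * Y x)" using sl x b(1) K_def by auto
        then show "c1 * \<phi>1 x + c2 * \<phi>2 x \<noteq> 0" using den[OF bI[OF x]] by blast
      qed
      moreover have "T < b" "ereal b \<le> x0" using b(1) KJ J_def K_def by auto
      ultimately show ?thesis by blast
    qed
    have right: "\<exists>a. T < a \<and> ereal a < x0 \<and> (\<forall>x\<in>{x. a < x \<and> ereal x < x0}. c1 * \<phi>1 x + c2 * \<phi>2 x \<noteq> 0)
        \<and> cmono {x. a < x \<and> ereal x < x0} g"
    proof -
      obtain a0 s where a0: "a0 \<in> J" and s: "s = 1 \<or> s = -1"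
        and sl: "\<And>x. a0 < x \<Longrightarrow> ereal x < x0 \<Longrightarrow> 0 < s * (c1 + c2 * Y x)"
      proof (cases "c1 = 0")
        case True
        then have c2: "c2 \<noteq> 0" using c by auto
        define s where "s = (if c2 > 0 then -1 else 1::real)"
        show ?thesis
        proof (rule that[of m0 s])
          fix x assume x: "m0 < x" "ereal x < x0"
          then have "x \<in> I" using m0 I_def by auto
          then have "Y x < 0" using Yneg by auto
          then show "0 < s * (c1 + c2 * Y x)" using c2 True unfolding s_def
            by (auto simp: mult_pos_pos mult_neg_neg mult_pos_neg mult_neg_pos)
        qed (use m0J s_def in auto)
      next
        case False
        define s where "s = (if c1 > 0 then 1 else -1::real)"
        have sT: "0 < s * c1" using False unfolding s_def by (auto simp: mult_neg_neg)
        have "((\<lambda>x. s * (c1 + c2 * Y x)) \<longlongrightarrow> s * (c1 + c2 * 0)) (left_filter x0 I)"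
          by (intro tendsto_intros Ylim)
        then have "eventually (\<lambda>x. 0 < s * (c1 + c2 * Y x)) (left_filter x0 I)"
          using order_tendstoD(1) sT by auto
        then obtain a where a: "ereal a < x0" "\<forall>x\<in>I. a < x \<and> ereal x < x0 \<longrightarrow> 0 < s * (c1 + c2 * Y x)"
          using ev_left[OF x0, of "\<lambda>x. 0 < s * (c1 + c2 * Y x)" I] by auto
        define a0 where "a0 = max a m0"
        have a0J: "a0 \<in> J" unfolding a0_def using m0 a J_def by (auto simp: max_def)
        show ?thesis
        proof (rule that[of a0 s])
          fix x assume x: "a0 < x" "ereal x < x0"
          then have "x \<in> I" using a0J J_def I_def by auto
          then show "0 < s * (c1 + c2 * Y x)" using a x unfolding a0_def by auto
        qed (use a0J s_def in auto)
      qed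
      define K where "K = {x. a0 < x \<and> ereal x < x0}"
      have KJ: "K \<subseteq> J" unfolding K_def using a0 J_def by auto
      obtain mm where mm: "a0 < mm" "ereal mm < x0" using exists_between[of a0 x0] a0 J_def by auto
      have mK: "mm \<in> K" unfolding K_def using mm by auto
      have lK: "\<And>x. x \<in> K \<Longrightarrow> 0 < s * (c1 + c2 * Y x)" using sl unfolding K_def by auto
      from moeb_right[OF zconv_subset[OF zG KJ] c s lK K_def mK]
      obtain a where a: "a \<in> K" "cmono {x. a < x \<and> ereal x < x0} (\<lambda>x. G x / (c1 + c2 * Y x))" by blast
      have aK: "x \<in> {x. a < x \<and> ereal x < x0} \<Longrightarrow> x \<in> K" for x using a K_def by auto
      have "cmono {x. a < x \<and> ereal x < x0} g" by (rule cmono_cong[OF _ a(2)]) (use geq aK KJ JI in auto)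
      moreover have "\<forall>x\<in>{x. a < x \<and> ereal x < x0}. c1 * \<phi>1 x + c2 * \<phi>2 x \<noteq> 0"
      proof
        fix x assume x: "x \<in> {x. a < x \<and> ereal x < x0}"
        have "0 < s * (c1 + c2 * Y x)" using lK aK x by auto
        moreover have "x \<in> I" using aK x KJ JI by auto
        ultimately show "c1 * \<phi>1 x + c2 * \<phi>2 x \<noteq> 0" using den by blast
      qed
      moreover have "T < a" "ereal a < x0" using a(1) KJ J_def K_def by auto
      ultimately show ?thesis by blast
    qed
    show "let g = (\<lambda>x. (f x + a1 * \<phi>1 x + a2 * \<phi>2 x) / (c1 * \<phi>1 x + c2 * \<phi>2 x))
           in (\<exists>b. T < b \<and> ereal b \<le> x0 \<and>
                 (\<forall>x\<in>{T<..<b}. c1 * \<phi>1 x + c2 * \<phi>2 x \<noteq> 0) \<and>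
                 ((\<exists>c. \<forall>x\<in>{T<..<b}. g x = c) \<or>
                  strict_mono_on {T<..<b} g \<or> strict_antimono_on {T<..<b} g)) \<and>
              (\<exists>a. T < a \<and> ereal a < x0 \<and>
                 (\<forall>x\<in>{x. a < x \<and> ereal x < x0}. c1 * \<phi>1 x + c2 * \<phi>2 x \<noteq> 0) \<and>
                 ((\<exists>c. \<forall>x\<in>{x. a < x \<and> ereal x < x0}. g x = c) \<or>
                  strict_mono_on {x. a < x \<and> ereal x < x0} g \<or>
                  strict_antimono_on {x. a < x \<and> ereal x < x0} g))"
      unfolding Let_def g_def[symmetric] using left right unfolding cmono_def by blast
  qed
  have parti: "\<forall>a b. T < a \<and> a \<le> b \<and> ereal b < x0 \<longrightarrow> abs_continuous_on a b f"
  proof (intro allI impI)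
    fix a b assume ab: "T < a \<and> a \<le> b \<and> ereal b < x0"
    define a' where "a' = (T + a) / 2"
    have a': "T < a'" "a' < a" using ab a'_def by auto
    obtain b' where b': "b < b'" "ereal b' < x0" using exists_between ab by blast
    have inJ: "x \<in> J" if "a' \<le> x" "x \<le> b'" for x
      using that a' b' J_def by auto (meson ereal_less_eq(3) le_less_trans)
    have abJ: "x \<in> J" if "x \<in> {a..b}" for x using that inJ a' b' by auto
    have a'J: "a' \<in> J" and b'J: "b' \<in> J" and aJ: "a \<in> J" and bJ: "b \<in> J"
      using inJ a' b' ab by auto
    define M where "M = max \<bar>slp Y H a' a\<bar> \<bar>slp Y H b b'\<bar>"
    have M0: "M \<ge> 0" unfolding M_def by auto
    have slb: "\<bar>slp Y H u v\<bar> \<le> M" if uv: "u \<in> {a..b}" "v \<in> {a..b}" "u < v" for u v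
    proof -
      have uJ: "u \<in> J" and vJ: "v \<in> J" using abJ uv by auto
      have lo: "slp Y H a' a \<le> slp Y H u v"
      proof (cases "a < u")
        case True
        have "slp Y H a' a \<le> slp Y H a' u" using zconv_slopes(1)[OF zc a'J aJ uJ] a' True by auto
        also have "\<dots> \<le> slp Y H a' v" using zconv_slopes(1)[OF zc a'J uJ vJ] a' True uv by auto
        also have "\<dots> \<le> slp Y H u v" using zconv_slopes(2)[OF zc a'J uJ vJ] a' True uv by auto
        finally show ?thesis .
      next
        case False
        then have "u = a" using uv by auto
        then show ?thesis using zconv_slopes[OF zc a'J aJ vJ] a' uv by auto
      qed
      have up: "slp Y H u v \<le> slp Y H b b'"
      proof (cases "v < b")
        case True
        have "slp Y H u v \<le> slp Y H u b" using zconv_slopes(1)[OF zc uJ vJ bJ] True uv by auto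
        also have "\<dots> \<le> slp Y H v b" using zconv_slopes(2)[OF zc uJ vJ bJ] True uv by auto
        also have "\<dots> \<le> slp Y H v b'" using zconv_slopes(1)[OF zc vJ bJ b'J] True b' by auto
        also have "\<dots> \<le> slp Y H b b'" using zconv_slopes(2)[OF zc vJ bJ b'J] True b' by auto
        finally show ?thesis .
      next
        case False
        then have "v = b" using uv by auto
        then show ?thesis using zconv_slopes[OF zc uJ bJ b'J] b' uv by auto
      qed
      show ?thesis using lo up unfolding M_def by auto
    qed
    have sub_ab: "{a..b} \<subseteq> I" using abJ JI by auto
    have p1ab: "\<phi>1 x \<noteq> 0" if "x \<in> {a..b}" for x using p1[of x] sub_ab that by auto
    have contY': "continuous_on {a..b} Y'"
      unfolding Y'_def using sub_ab p1ab
      by (intro continuous_intros continuous_on_subset[OF c1'] continuous_on_subset[OF c2']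
          continuous_on_subset[OF cont1] continuous_on_subset[OF cont2]) auto
    obtain K1 where K1: "K1 \<ge> 0" "\<And>u v. u \<in> {a..b} \<Longrightarrow> v \<in> {a..b} \<Longrightarrow> \<bar>Y v - Y u\<bar> \<le> K1 * \<bar>v - u\<bar>"
      using c1_lip[of a b Y Y'] dYJ abJ contY' by blast
    obtain K2 where K2: "K2 \<ge> 0" "\<And>u v. u \<in> {a..b} \<Longrightarrow> v \<in> {a..b} \<Longrightarrow> \<bar>\<phi>1 v - \<phi>1 u\<bar> \<le> K2 * \<bar>v - u\<bar>"
      using c1_lip[of a b \<phi>1 \<phi>1'] d1J abJ continuous_on_subset[OF c1' sub_ab] by blast
    obtain B1 where B1: "B1 \<ge> 0" "\<And>x. x \<in> {a..b} \<Longrightarrow> norm (\<phi>1 x) \<le> B1"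
      using continuous_on_compact_bound[OF compact_Icc continuous_on_subset[OF cont1 sub_ab]] by blast
    have Hl0: "\<bar>H v - H u\<bar> \<le> M * (Y v - Y u)" if uv: "u \<in> {a..b}" "v \<in> {a..b}" "u < v" for u v
    proof -
      have Yl: "Y u < Y v" using Ymono[of u v] uv(3) subsetD[OF sub_ab uv(1)] subsetD[OF sub_ab uv(2)] by blast
      have "H v - H u = slp Y H u v * (Y v - Y u)" unfolding slp_def using Yl by auto
      then have "\<bar>H v - H u\<bar> = \<bar>slp Y H u v\<bar> * (Y v - Y u)" using Yl by (simp add: abs_mult)
      also have "\<dots> \<le> M * (Y v - Y u)" using slb[OF uv] Yl by (intro mult_right_mono) auto
      finally show ?thesis .
    qed
    have Hl: "\<bar>H v - H u\<bar> \<le> M * K1 * \<bar>v - u\<bar>" if uv: "u \<in> {a..b}" "v \<in> {a..b}" for u v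
    proof -
      have *: "\<bar>H v - H u\<bar> \<le> M * K1 * \<bar>v - u\<bar>" if uv: "u \<in> {a..b}" "v \<in> {a..b}" "u < v" for u v
      proof -
        have "\<bar>H v - H u\<bar> \<le> M * (Y v - Y u)" by (rule Hl0[OF uv])
        also have "\<dots> \<le> M * (K1 * \<bar>v - u\<bar>)" using K1(2)[OF uv(1,2)] M0 by (intro mult_left_mono) auto
        finally show ?thesis by simp
      qed
      show ?thesis using *[OF uv] *[OF uv(2,1)] by (cases u v rule: linorder_cases) (auto simp: abs_minus_commute)
    qed
    define B2 where "B2 = \<bar>H a\<bar> + M * K1 * (b - a)"
    have B2: "\<bar>H x\<bar> \<le> B2" if "x \<in> {a..b}" for x
    proof -
      have "\<bar>H x - H a\<bar> \<le> M * K1 * \<bar>x - a\<bar>" using Hl[of a x] that ab by auto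
      also have "\<dots> \<le> M * K1 * (b - a)" using that M0 K1 by (intro mult_left_mono) auto
      finally show ?thesis unfolding B2_def by auto
    qed
    have feq: "f x = \<phi>1 x * H x" if "x \<in> {a..b}" for x
      using p1[of x] sub_ab that unfolding H_def by auto
    show "abs_continuous_on a b f"
    proof (rule lip_abs[of "B1 * (M * K1) + B2 * K2"])
      show "0 \<le> B1 * (M * K1) + B2 * K2" using B1 M0 K1 K2 B2[of a] ab
        by (intro add_nonneg_nonneg mult_nonneg_nonneg) auto
      fix u v assume uv: "u \<in> {a..b}" "v \<in> {a..b}"
      have "f v - f u = \<phi>1 v * (H v - H u) + H u * (\<phi>1 v - \<phi>1 u)"
        using feq uv by (simp add: algebra_simps)
      then have "\<bar>f v - f u\<bar> \<le> \<bar>\<phi>1 v\<bar> * \<bar>H v - H u\<bar> + \<bar>H u\<bar> * \<bar>\<phi>1 v - \<phi>1 u\<bar>"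
        by (metis abs_mult abs_triangle_ineq)
      also have "\<dots> \<le> B1 * (M * K1 * \<bar>v - u\<bar>) + B2 * (K2 * \<bar>v - u\<bar>)"
        using B1(2)[OF uv(2)] Hl[OF uv] B2[OF uv(1)] K2(2)[OF uv] B1(1)
        by (intro add_mono mult_mono) auto
      finally show "\<bar>f v - f u\<bar> \<le> (B1 * (M * K1) + B2 * K2) * \<bar>v - u\<bar>"
        by (simp add: algebra_simps)
    qed
  qed
  have Jlow: "\<exists>a\<in>J. a < t" if "t \<in> J" for t
  proof -
    have tt: "T < t" "ereal t < x0" using that J_def by auto
    then have "(T + t)/2 \<in> J" unfolding J_def using ereal_lt_trans[of "(T + t)/2" t x0] by auto
    then show ?thesis using tt by (intro bexI[of _ "(T + t)/2"]) auto
  qed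
  have Jup: "\<exists>b\<in>J. t < b" if tJ: "t \<in> J" for t
  proof -
    have "ereal t < x0" using tJ J_def by auto
    then obtain b where "t < b" "ereal b < x0" using exists_between by blast
    then show ?thesis using tJ unfolding J_def by (intro bexI[of _ b]) auto
  qed
  have inJ: "x \<in> J" if "a \<in> J" "b \<in> J" "a \<le> x" "x \<le> b" for a b x
    using that J_def by auto (meson ereal_less_eq(3) le_less_trans)
  have slsym: "slp Y H a b = slp Y H b a" for a b unfolding slp_def by (metis minus_diff_eq minus_divide_divide)
  have dq: "(H x - H t) / (x - t) = slp Y H t x * ((Y x - Y t) / (x - t))" if "x \<in> J" "t \<in> J" "x \<noteq> t" for x t
  proof -
    have "Y x \<noteq> Y t" using Ymono[of x t] Ymono[of t x] that JIx[OF that(1)] JIx[OF that(2)]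
      by (cases x t rule: linorder_cases) auto
    then have nz: "Y x - Y t \<noteq> 0" "x - t \<noteq> 0" using that by auto
    show ?thesis unfolding slp_def using nz by simp
  qed
  define Dp where "Dp = (\<lambda>t. Inf ((\<lambda>b. slp Y H t b) ` ({t<..} \<inter> J)))"
  define Dm where "Dm = (\<lambda>t. Sup ((\<lambda>a. slp Y H a t) ` ({..<t} \<inter> J)))"
  have sl_cross: "slp Y H a t \<le> slp Y H t b" if "a \<in> J" "t \<in> J" "b \<in> J" "a < t" "t < b" for a t b
    using zconv_slopes[OF zc that] by auto
  have bddb: "bdd_below ((\<lambda>b. slp Y H t b) ` ({t<..} \<inter> J))" if tJ: "t \<in> J" for t
  proof -
    obtain a where "a \<in> J" "a < t" using Jlow[OF tJ] by blast
    then show ?thesis using sl_cross tJ by (intro bdd_belowI2[where m="slp Y H a t"]) auto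
  qed
  have bdda: "bdd_above ((\<lambda>a. slp Y H a t) ` ({..<t} \<inter> J))" if tJ: "t \<in> J" for t
  proof -
    obtain b where "b \<in> J" "t < b" using Jup[OF tJ] by blast
    then show ?thesis using sl_cross tJ by (intro bdd_aboveI2[where M="slp Y H t b"]) auto
  qed
  have Dmp: "Dm t \<le> Dp t" if t: "t \<in> J" for t
  proof -
    have ne1: "({t<..} \<inter> J) \<noteq> {}" "({..<t} \<inter> J) \<noteq> {}" using Jlow[OF t] Jup[OF t] by auto
    have "Dm t \<le> slp Y H t b" if "b \<in> J" "t < b" for b
      unfolding Dm_def using ne1 sl_cross that t by (intro cSup_least) auto
    then show ?thesis unfolding Dp_def using ne1 by (intro cInf_greatest) (auto simp: Dm_def)
  qed
  have Dst: "Dp s \<le> slp Y H s t" "slp Y H s t \<le> Dm t" if "s \<in> J" "t \<in> J" "s < t" for s t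
  proof -
    show "Dp s \<le> slp Y H s t" unfolding Dp_def using that bddb[of s] by (intro cInf_lower) auto
    show "slp Y H s t \<le> Dm t" unfolding Dm_def using that bdda[of t] by (intro cSup_upper) auto
  qed
  have Hdiff: "(H has_real_derivative Dp t * Y' t) (at t)" if t: "t \<in> J" "Dm t = Dp t" for t
  proof -
    have Yq: "((\<lambda>x. (Y x - Y t) / (x - t)) \<longlongrightarrow> Y' t) (at t)"
      using dYJ[OF t(1)] unfolding has_field_derivative_iff .
    have R: "((\<lambda>x. (H x - H t) / (x - t)) \<longlongrightarrow> Dp t * Y' t) (at_right t)"
    proof -
      have e: "at_right t = at t within ({t<..} \<inter> J)"
        by (rule at_within_nhd[OF t(1) openJ]) auto
      obtain a where a: "a \<in> J" "a < t" using Jlow[OF t(1)] by blast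
      have l1: "((\<lambda>b. slp Y H t b) \<longlongrightarrow> Dp t) (at_right t)"
        unfolding e Dp_def
      proof (rule Lim_right_bound[where K="slp Y H a t"])
        show "\<And>b. b \<in> J \<Longrightarrow> t < b \<Longrightarrow> slp Y H a t \<le> slp Y H t b" using sl_cross a t by auto
        fix b c assume "b \<in> J" "c \<in> J" "t < b" "b \<le> c"
        then show "slp Y H t b \<le> slp Y H t c" using zconv_slopes(1)[OF zc t(1), of b c]
          by (cases "b = c") auto
      qed
      have l2: "((\<lambda>x. (Y x - Y t) / (x - t)) \<longlongrightarrow> Y' t) (at_right t)"
        using Yq by (rule tendsto_within_subset) auto
      have ev: "eventually (\<lambda>x. slp Y H t x * ((Y x - Y t) / (x - t)) = (H x - H t) / (x - t)) (at_right t)"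
        unfolding e eventually_at_filter using dq t(1) by auto
      show ?thesis using tendsto_mult[OF l1 l2] ev by (rule Lim_transform_eventually)
    qed
    have L: "((\<lambda>x. (H x - H t) / (x - t)) \<longlongrightarrow> Dp t * Y' t) (at_left t)"
    proof -
      have e: "at_left t = at t within ({..<t} \<inter> J)"
        by (rule at_within_nhd[OF t(1) openJ]) auto
      obtain b where b: "b \<in> J" "t < b" using Jup[OF t(1)] by blast
      have l1: "((\<lambda>a. slp Y H a t) \<longlongrightarrow> Dm t) (at_left t)"
        unfolding e Dm_def
      proof (rule Lim_left_bound[where K="slp Y H t b"])
        show "\<And>a. a \<in> J \<Longrightarrow> a < t \<Longrightarrow> slp Y H a t \<le> slp Y H t b" using sl_cross b t by auto
        fix a c assume "a \<in> J" "c \<in> J" "c < t" "a \<le> c"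
        then show "slp Y H a t \<le> slp Y H c t" using zconv_slopes(2)[OF zc _ _ t(1), of a c]
          by (cases "a = c") auto
      qed
      have l1': "((\<lambda>a. slp Y H t a) \<longlongrightarrow> Dp t) (at_left t)" using l1 t(2) slsym by simp
      have l2: "((\<lambda>x. (Y x - Y t) / (x - t)) \<longlongrightarrow> Y' t) (at_left t)"
        using Yq by (rule tendsto_within_subset) auto
      have ev: "eventually (\<lambda>x. slp Y H t x * ((Y x - Y t) / (x - t)) = (H x - H t) / (x - t)) (at_left t)"
        unfolding e eventually_at_filter using dq t(1) by auto
      show ?thesis using tendsto_mult[OF l1' l2] ev by (rule Lim_transform_eventually)
    qed
    show ?thesis unfolding has_field_derivative_iff using filterlim_at_split L R by blast
  qed
  have fdiff: "f differentiable (at t)" if t: "t \<in> J" "Dm t = Dp t" for t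
  proof -
    have "((\<lambda>x. \<phi>1 x * H x) has_real_derivative \<phi>1' t * H t + Dp t * Y' t * \<phi>1 t) (at t)"
      by (rule DERIV_mult[OF d1J[OF t(1)] Hdiff[OF t]])
    moreover have "\<phi>1 x * H x = f x" if "x \<in> J" for x using p1[of x] that JI unfolding H_def by auto
    ultimately have "(f has_real_derivative \<phi>1' t * H t + Dp t * Y' t * \<phi>1 t) (at t)"
      using has_field_derivative_transform_within_open[OF _ openJ t(1)] by blast
    then show ?thesis using DERIV_imp_deriv DERIV_deriv_iff_real_differentiable by metis
  qed
  define N where "N = {t \<in> J. \<not> f differentiable (at t)}"
  have Nlt: "Dm t < Dp t" if "t \<in> N" for t using that Dmp fdiff unfolding N_def by fastforce
  define q where "q = (\<lambda>t. SOME r. r \<in> \<rat> \<and> Dm t < r \<and> r < Dp t)"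
  have q: "q t \<in> \<rat> \<and> Dm t < q t \<and> q t < Dp t" if tN: "t \<in> N" for t
  proof -
    obtain r where "r \<in> \<rat>" "Dm t < r" "r < Dp t" using Rats_dense_in_real[OF Nlt[OF tN]] by blast
    then show ?thesis unfolding q_def by (intro someI[of "\<lambda>r. r \<in> \<rat> \<and> Dm t < r \<and> r < Dp t" r]) auto
  qed
  have injq: "inj_on q N"
  proof (rule inj_onI)
    fix s t assume st: "s \<in> N" "t \<in> N" "q s = q t"
    show "s = t"
    proof (rule ccontr)
      assume "s \<noteq> t"
      then consider "s < t" | "t < s" by linarith
      then show False
      proof cases
        case 1
        have "q s < Dp s" using q[OF st(1)] by auto
        also have "\<dots> \<le> Dm t" using Dst[of s t] st 1 N_def by fastforce
        also have "\<dots> < q t" using q[OF st(2)] by auto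
        finally show False using st by auto
      next
        case 2
        have "q t < Dp t" using q[OF st(2)] by auto
        also have "\<dots> \<le> Dm s" using Dst[of t s] st 2 N_def by fastforce
        also have "\<dots> < q s" using q[OF st(1)] by auto
        finally show False using st by auto
      qed
    qed
  qed
  have "countable (q ` N)" using q by (intro countable_subset[OF _ countable_rat]) auto
  then have cN: "countable N" using injq countable_image_inj_on by blast
  have Nnull: "N \<in> null_sets lebesgue"
    using null_sets_completionI[OF countable_imp_null_set_lborel[OF cN]] .
  have dfx: "(f has_real_derivative deriv f t) (at t)" if "f differentiable (at t)" for t
    using that DERIV_deriv_iff_real_differentiable by blast
  have f2lim: "((\<lambda>x. slp Y H t x) \<longlongrightarrow> f2s t) (at t)" if t: "t \<in> J" "f differentiable (at t)" for t
  proof -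
    have tI: "t \<in> I" using JIx t by auto
    define Hd where "Hd = (deriv f t * \<phi>1 t - f t * \<phi>1' t) / (\<phi>1 t * \<phi>1 t)"
    have dH: "(H has_real_derivative Hd) (at t)"
      unfolding H_def Hd_def using DERIV_divide[OF dfx[OF t(2)] d1J[OF t(1)]] p1[OF tI] by auto
    have Hq: "((\<lambda>x. (H x - H t) / (x - t)) \<longlongrightarrow> Hd) (at t)"
      using dH unfolding has_field_derivative_iff .
    have Yq: "((\<lambda>x. (Y x - Y t) / (x - t)) \<longlongrightarrow> Y' t) (at t)"
      using dYJ[OF t(1)] unfolding has_field_derivative_iff .
    have Y0: "Y' t \<noteq> 0" using Y'p[OF tI] by auto
    have lim: "((\<lambda>x. ((H x - H t) / (x - t)) / ((Y x - Y t) / (x - t))) \<longlongrightarrow> Hd / Y' t) (at t)"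
      by (rule tendsto_divide[OF Hq Yq Y0])
    have ev: "eventually (\<lambda>x. ((H x - H t) / (x - t)) / ((Y x - Y t) / (x - t)) = slp Y H t x) (at t)"
    proof -
      have "eventually (\<lambda>x. x \<noteq> t) (at t)" by (simp add: eventually_at_filter)
      then show ?thesis by eventually_elim (simp add: slp_def)
    qed
    have W0: "\<phi>1 t * \<phi>2' t - \<phi>1' t * \<phi>2 t \<noteq> 0" using Wp[OF tI] by auto
    have eq: "Hd / Y' t = f2s t"
      unfolding Hd_def Y'_def f2s_def using p1[OF tI] W0
      by (simp add: field_simps)
    show ?thesis using Lim_transform_eventually[OF lim ev] eq by simp
  qed
  have f2le1: "f2s s \<le> slp Y H s t"
    if st: "s \<in> J" "t \<in> J" "s < t" "f differentiable (at s)" for s t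
  proof -
    have l: "((\<lambda>x. slp Y H s x) \<longlongrightarrow> f2s s) (at_right s)"
      using f2lim[OF st(1,4)] by (rule tendsto_within_subset) auto
    have "eventually (\<lambda>x. slp Y H s x \<le> slp Y H s t) (at_right s)"
      using eventually_at_right_real[OF st(3)]
    proof eventually_elim
      case (elim x)
      then have xJ: "x \<in> J" using inJ[OF st(1) st(2)] by auto
      then show ?case using zconv_slopes(1)[OF zc st(1) xJ st(2)] elim by auto
    qed
    then show "f2s s \<le> slp Y H s t" using tendsto_upperbound[OF l] by auto
  qed
  have f2le2: "slp Y H s t \<le> f2s t"
    if st: "s \<in> J" "t \<in> J" "s < t" "f differentiable (at t)" for s t
  proof -
    have l: "((\<lambda>x. slp Y H t x) \<longlongrightarrow> f2s t) (at_left t)"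
      using f2lim[OF st(2,4)] by (rule tendsto_within_subset) auto
    have "eventually (\<lambda>x. slp Y H s t \<le> slp Y H t x) (at_left t)"
      using eventually_at_left_real[OF st(3)]
    proof eventually_elim
      case (elim x)
      then have xJ: "x \<in> J" using inJ[OF st(1) st(2)] by auto
      then show ?case using zconv_slopes(2)[OF zc st(1) xJ st(2)] elim slsym[of x t] by auto
    qed
    then show "slp Y H s t \<le> f2s t" using tendsto_lowerbound[OF l] by auto
  qed
  have f2le: "f2s s \<le> slp Y H s t \<and> slp Y H s t \<le> f2s t"
    if st: "s \<in> J" "t \<in> J" "s < t" "f differentiable (at s)" "f differentiable (at t)" for s t
    using f2le1[OF st(1-4)] f2le2[OF st(1-3,5)] by auto
  have f1eq: "f1s t = H t - Y t * f2s t" if tJ: "t \<in> J" for t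
  proof -
    have tI: "t \<in> I" using JIx tJ by auto
    have W0: "\<phi>1 t * \<phi>2' t - \<phi>1' t * \<phi>2 t \<noteq> 0" using Wp[OF tI] by auto
    show ?thesis unfolding f1s_def f2s_def H_def Y_def using p1[OF tI] W0
      by (simp add: field_simps)
  qed
  have Fseq: "Fs t = \<phi>1 T * (f1s t + Y T * f2s t)" for t
  proof -
    have "Fs t = \<phi>1 T * f1s t + \<phi>2 T * f2s t" by (simp add: Fs_def f1s_def f2s_def)
    moreover have "\<phi>2 T = \<phi>1 T * Y T" unfolding Y_def using p1[OF TI] by auto
    ultimately show ?thesis by (simp add: algebra_simps)
  qed
  have sgn2: "sgn (\<phi>2 t) = -1" if tJ: "t \<in> J" for t
  proof -
    have tI: "t \<in> I" using JIx tJ by auto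
    have "\<phi>2 t = \<phi>1 t * Y t" unfolding Y_def using p1[OF tI] by auto
    then have "\<phi>2 t < 0" using p1[OF tI] Yneg[OF tI] by (simp add: mult_pos_neg)
    then show ?thesis by simp
  qed
  have key: "f1s s \<le> f1s t \<and> Fs t \<le> Fs s"
    if st: "s \<in> J - N" "t \<in> J - N" "s < t" for s t
  proof -
    have sJ: "s \<in> J" and tJ: "t \<in> J" and ds: "f differentiable (at s)" and dt: "f differentiable (at t)"
      using st N_def by auto
    have sI: "s \<in> I" and tI: "t \<in> I" using sJ tJ JIx by auto
    define S where "S = slp Y H s t"
    have b: "f2s s \<le> S" "S \<le> f2s t" using f2le[OF sJ tJ st(3) ds dt] S_def by auto
    have Yst: "Y s < Y t" using Ymono[OF sI tI st(3)] .
    have Heq: "H t - H s = S * (Y t - Y s)" unfolding S_def slp_def using Yst by auto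
    have YT: "Y T < Y s" "Y T < Y t" using Ymono[OF TI sI] Ymono[OF TI tI] sJ tJ J_def by auto
    have n1: "0 \<le> Y t * (S - f2s t)" using Yneg[OF tI] b by (intro mult_nonpos_nonpos) auto
    have n2: "0 \<le> Y s * (f2s s - S)" using Yneg[OF sI] b by (intro mult_nonpos_nonpos) auto
    have e1: "f1s t - f1s s = Y t * (S - f2s t) + Y s * (f2s s - S)"
      using f1eq[OF sJ] f1eq[OF tJ] Heq by (simp add: algebra_simps)
    have m1: "(Y t - Y T) * (S - f2s t) \<le> 0" using YT b by (intro mult_nonneg_nonpos) auto
    have m2: "(Y s - Y T) * (f2s s - S) \<le> 0" using YT b by (intro mult_nonneg_nonpos) auto
    have e2: "Fs t - Fs s = \<phi>1 T * ((Y t - Y T) * (S - f2s t) + (Y s - Y T) * (f2s s - S))"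
    proof -
      have "Fs t - Fs s = \<phi>1 T * ((f1s t - f1s s) + Y T * (f2s t - f2s s))"
        using Fseq[of t] Fseq[of s] by (simp add: algebra_simps)
      also have "\<dots> = \<phi>1 T * ((Y t - Y T) * (S - f2s t) + (Y s - Y T) * (f2s s - S))"
        unfolding e1 by (simp add: algebra_simps)
      finally show ?thesis .
    qed
    have "Fs t - Fs s \<le> 0" unfolding e2 using m1 m2 p1[OF TI] by (intro mult_nonneg_nonpos) auto
    then show ?thesis using e1 n1 n2 by auto
  qed
  have monoI': "mono_on A g" if "\<And>r s. r \<in> A \<Longrightarrow> s \<in> A \<Longrightarrow> r < s \<Longrightarrow> g r \<le> (g s::real)" for A :: "real set" and g
  proof (rule mono_onI)
    fix r s assume "r \<in> A" "s \<in> A" "r \<le> s"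
    then show "g r \<le> g s" using that[of r s] by (cases "r = s") auto
  qed
  have antimonoI': "antimono_on A g" if "\<And>r s. r \<in> A \<Longrightarrow> s \<in> A \<Longrightarrow> r < s \<Longrightarrow> g s \<le> (g r::real)" for A :: "real set" and g
  proof (rule monotone_onI)
    fix r s assume "r \<in> A" "s \<in> A" "r \<le> s"
    then show "g s \<le> g r" using that[of r s] by (cases "r = s") auto
  qed
  have m2: "mono_on (J - N) f2s"
  proof (rule monoI')
    fix r s assume "r \<in> J - N" "s \<in> J - N" "r < s"
    then show "f2s r \<le> f2s s" using f2le[of r s] N_def by force
  qed
  have m1: "mono_on (J - N) f1s" by (rule monoI') (use key in auto)
  have mF: "antimono_on (J - N) Fs" by (rule antimonoI') (use key in auto)
  have mS: "mono_on (J - N) (\<lambda>t. sgn (\<phi>2 t) * Fs t)"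
    by (rule monoI') (use key sgn2 in auto)
  have dN: "\<forall>t \<in> J - N. f differentiable (at t)" using N_def by auto
  have partii: "\<exists>N. N \<in> null_sets lebesgue \<and>
          (\<forall>t \<in> J - N. f differentiable (at t)) \<and>
          mono_on (J - N) f2s \<and>
          ((mono_on (J - N) f1s \<and> antimono_on (J - N) Fs) \<or>
           (antimono_on (J - N) f1s \<and> mono_on (J - N) Fs)) \<and>
          mono_on (J - N) (\<lambda>t. sgn (\<phi>2 t) * Fs t)"
    using Nnull dN m2 m1 mF mS by blast
  have partiv: "\<exists>L :: ereal.
          ((\<lambda>x. ereal (f x / \<phi>1 x)) \<longlongrightarrow> L) (left_filter x0 J) \<and>
          ((\<lambda>x. ereal (deriv (\<lambda>y. f y / \<phi>2 y) x / deriv (\<lambda>y. \<phi>1 y / \<phi>2 y) x)) \<longlongrightarrow> L)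
            (left_filter x0 {x \<in> J. f differentiable (at x)})"
  proof -
    have "let g = (\<lambda>x. (f x + 0 * \<phi>1 x + 0 * \<phi>2 x) / (1 * \<phi>1 x + 0 * \<phi>2 x))
           in (\<exists>a. T < a \<and> ereal a < x0 \<and>
                 (\<forall>x\<in>{x. a < x \<and> ereal x < x0}. 1 * \<phi>1 x + 0 * \<phi>2 x \<noteq> 0) \<and>
                 ((\<exists>c. \<forall>x\<in>{x. a < x \<and> ereal x < x0}. g x = c) \<or>
                  strict_mono_on {x. a < x \<and> ereal x < x0} g \<or>
                  strict_antimono_on {x. a < x \<and> ereal x < x0} g))"
      using partiii[rule_format, of 1 0 0 0] unfolding Let_def by auto
    then obtain a where a: "T < a" "ereal a < x0" "cmono {x. a < x \<and> ereal x < x0} H"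
      unfolding Let_def cmono_def H_def by auto
    obtain L where L: "((\<lambda>x. ereal (H x)) \<longlongrightarrow> L) (left_filter x0 J)"
      using cmono_lim[OF x0 a(3) a(2)] by blast
    have JJ: "{x. T < x \<and> ereal x < x0} \<subseteq> J" using J_def by auto
    have nt: "left_filter x0 J \<noteq> bot" by (rule left_filter_nontriv[OF x0 Tx0 JJ])
    have fJI: "left_filter x0 J \<le> left_filter x0 I"
      unfolding left_filter_def using JI by (intro inf_mono) auto
    have YlimJ: "(Y \<longlongrightarrow> 0) (left_filter x0 J)" using tendsto_mono[OF fJI Ylim] .
    define Jd where "Jd = {x \<in> J. f differentiable (at x)}"
    have fJd: "left_filter x0 Jd \<le> left_filter x0 J"
      unfolding left_filter_def Jd_def by (intro inf_mono) auto
    have up: "ereal (f1s t) \<le> L" if t: "t \<in> J" "f differentiable (at t)" for t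
    proof -
      have tI: "t \<in> I" using JIx t by auto
      have lim: "((\<lambda>u. ereal (H u) + ereal (- (Y u * f2s t))) \<longlongrightarrow> L + ereal (- (0 * f2s t))) (left_filter x0 J)"
        by (intro tendsto_add_ereal_general L tendsto_ereal tendsto_intros YlimJ) auto
      have ev: "eventually (\<lambda>u. ereal (f1s t) \<le> ereal (H u) + ereal (- (Y u * f2s t))) (left_filter x0 J)"
        unfolding ev_left[OF x0]
      proof (rule exI[of _ t], intro conjI ballI impI)
        show "ereal t < x0" using t J_def by auto
        fix u assume u: "u \<in> J" "t < u \<and> ereal u < x0"
        have uI: "u \<in> I" using JIx u by auto
        have Ytu: "Y t < Y u" using Ymono[OF tI uI] u by auto
        have "f2s t \<le> slp Y H t u" using f2le1[OF t(1) u(1) _ t(2)] u by auto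
        then have "f2s t * (Y u - Y t) \<le> slp Y H t u * (Y u - Y t)" using Ytu by (intro mult_right_mono) auto
        also have "\<dots> = H u - H t" unfolding slp_def using Ytu by auto
        finally have "f1s t \<le> H u - Y u * f2s t" using f1eq[OF t(1)] by (simp add: algebra_simps)
        then show "ereal (f1s t) \<le> ereal (H u) + ereal (- (Y u * f2s t))" by simp
      qed
      show ?thesis using tendsto_lowerbound[OF lim ev nt] by simp
    qed
    have s0: "m0 \<in> J" if "T < m0" "ereal m0 < x0" for m0 using that J_def by auto
    obtain m0 where m0: "T < m0" "ereal m0 < x0" using exists_between[OF Tx0] by blast
    have m0J: "m0 \<in> J" using s0 m0 by auto
    have m0I: "m0 \<in> I" using JIx m0J by auto
    define A where "A = (\<lambda>x. H x - Y x * slp Y H m0 x)"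
    have Aeq: "A x = H x * (- Y m0 / (Y x - Y m0)) + Y x * H m0 / (Y x - Y m0)" if "Y x \<noteq> Y m0" for x
    proof -
      have nz: "Y x - Y m0 \<noteq> 0" using that by auto
      show ?thesis unfolding A_def slp_def using Aeq_lemma[OF nz] .
    qed
    have limA: "((\<lambda>x. ereal (A x)) \<longlongrightarrow> L) (left_filter x0 J)"
    proof -
      have Ym0: "Y m0 \<noteq> 0" using Yneg[OF m0I] by auto
      have c: "((\<lambda>x. - Y m0 / (Y x - Y m0)) \<longlongrightarrow> - Y m0 / (0 - Y m0)) (left_filter x0 J)"
        using Ym0 by (intro tendsto_intros YlimJ) auto
      have d: "((\<lambda>x. Y x * H m0 / (Y x - Y m0)) \<longlongrightarrow> 0 * H m0 / (0 - Y m0)) (left_filter x0 J)"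
        using Ym0 by (intro tendsto_intros YlimJ) auto
      have c1: "- Y m0 / (0 - Y m0) = 1" using Ym0 by simp
      have lim: "((\<lambda>x. ereal (H x) * ereal (- Y m0 / (Y x - Y m0)) + ereal (Y x * H m0 / (Y x - Y m0)))
          \<longlongrightarrow> L * ereal 1 + ereal 0) (left_filter x0 J)"
        using c d unfolding c1 by (intro tendsto_add_ereal_general tendsto_mult_ereal L tendsto_ereal) auto
      have ev: "eventually (\<lambda>x. ereal (H x) * ereal (- Y m0 / (Y x - Y m0)) + ereal (Y x * H m0 / (Y x - Y m0))
          = ereal (A x)) (left_filter x0 J)"
        unfolding ev_left[OF x0]
      proof (rule exI[of _ m0], intro conjI ballI impI)
        show "ereal m0 < x0" by fact
        fix x assume x: "x \<in> J" "m0 < x \<and> ereal x < x0"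
        have "Y m0 < Y x" using Ymono[OF m0I JIx[OF x(1)]] x by auto
        then show "ereal (H x) * ereal (- Y m0 / (Y x - Y m0)) + ereal (Y x * H m0 / (Y x - Y m0)) = ereal (A x)"
          using Aeq[of x] by simp
      qed
      show ?thesis using Lim_transform_eventually[OF lim ev] by simp
    qed
    have ratio: "deriv (\<lambda>y. f y / \<phi>2 y) x / deriv (\<lambda>y. \<phi>1 y / \<phi>2 y) x = f1s x"
      if x: "x \<in> J" "f differentiable (at x)" for x
    proof -
      have xI: "x \<in> I" using JIx x by auto
      have n2: "\<phi>2 x \<noteq> 0" using p2[OF xI] .
      have e1: "deriv (\<lambda>y. f y / \<phi>2 y) x = (deriv f x * \<phi>2 x - f x * \<phi>2' x) / (\<phi>2 x * \<phi>2 x)"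
        by (rule DERIV_imp_deriv[OF DERIV_divide[OF dfx[OF x(2)] d2J[OF x(1)] n2]])
      have e2: "deriv (\<lambda>y. \<phi>1 y / \<phi>2 y) x = (\<phi>1' x * \<phi>2 x - \<phi>1 x * \<phi>2' x) / (\<phi>2 x * \<phi>2 x)"
        by (rule DERIV_imp_deriv[OF DERIV_divide[OF d1J[OF x(1)] d2J[OF x(1)] n2]])
      have W0: "\<phi>1 x * \<phi>2' x - \<phi>1' x * \<phi>2 x \<noteq> 0" using Wp[OF xI] by auto
      have W0': "\<phi>1' x * \<phi>2 x - \<phi>1 x * \<phi>2' x \<noteq> 0" using W0 by (simp add: algebra_simps)
      show ?thesis unfolding e1 e2 f1s_def using n2 W0 W0'
        by (simp add: field_simps)
    qed
    have lo: "A x \<le> f1s x" if x: "x \<in> J" "f differentiable (at x)" "m0 < x" for x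
    proof -
      have "slp Y H m0 x \<le> f2s x" using f2le2[OF m0J x(1) x(3) x(2)] .
      moreover have "Y x < 0" using Yneg JIx x by auto
      ultimately have "- Y x * slp Y H m0 x \<le> - Y x * f2s x" by (intro mult_left_mono) auto
      then show ?thesis unfolding A_def using f1eq[OF x(1)] by simp
    qed
    have ev1: "eventually (\<lambda>x. ereal (A x) \<le> ereal (deriv (\<lambda>y. f y / \<phi>2 y) x / deriv (\<lambda>y. \<phi>1 y / \<phi>2 y) x)) (left_filter x0 Jd)"
      unfolding ev_left[OF x0] using m0 lo ratio unfolding Jd_def by (intro exI[of _ m0]) auto
    have ev2: "eventually (\<lambda>x. ereal (deriv (\<lambda>y. f y / \<phi>2 y) x / deriv (\<lambda>y. \<phi>1 y / \<phi>2 y) x) \<le> L) (left_filter x0 Jd)"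
      unfolding ev_left[OF x0] using m0 up ratio unfolding Jd_def by (intro exI[of _ m0]) auto
    have "((\<lambda>x. ereal (deriv (\<lambda>y. f y / \<phi>2 y) x / deriv (\<lambda>y. \<phi>1 y / \<phi>2 y) x)) \<longlongrightarrow> L) (left_filter x0 Jd)"
      by (rule tendsto_sandwich[OF ev1 ev2 tendsto_mono[OF fJd limA] tendsto_const])
    moreover have "((\<lambda>x. ereal (f x / \<phi>1 x)) \<longlongrightarrow> L) (left_filter x0 J)" using L unfolding H_def .
    ultimately show ?thesis unfolding Jd_def by blast
  qed
  show ?thesis using parti partii partiii partiv by blast
qed

end
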